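(* Let $X_1,\dots,X_d$ be disjoint finite nonempty sets, $X$ their product, $S\subseteq[d]$ with $|S|\ge 2$, and $Z\subseteq X$ such that $\pi_{[d]-S}(Z)$ is a single point. Let $\delta>0$ with $|Z|\ge \delta\cdot|\pi_S(X)|$, and suppose $|X_i|\ge n$ for every $i\in S$. Then for every $\epsilon>0$, \[\frac{|\mathscr{G}_S(\epsilon, Z)|}{|\mathscr{G}_S(Z)|} \le \exp\left( |\pi_S(X)| \cdot \left(-\delta \epsilon^2 + 2^{|S|+2}\cdot n^{-1/2^{|S|}}\right)\right).\]
   Context: $[d]=\{1,\dots,d\}$; $\pi_T$ denotes projection of $X$ (or of $\overline{X}_S$) onto the factors indexed by $T$, so $\pi_S(X)=\prod_{i\in S}X_i$. $\overline{X}_S=\prod_{i=1}^d W_i$ with $W_i=X_i\times X_i$ for $i\in S$ and $W_i=X_i$ otherwise. For $\bar x\in\overline{X}_S$, $\widehat{x}(\emptyset)$ is the set of points $y\in X$ with $\pi_i(y)$ one of the two entries of the pair $\pi_i(\bar x)$ for $i\in S$ and $\pi_i(y)=\pi_i(\bar x)$ for $i\notin S$. For $F:Z\to\mathbb{F}_2$ define $dF$ on $\{\bar x\in\overline{X}_S:\widehat{x}(\emptyset)\subseteq Z\}$ by $dF(\bar x)=\sum_{x\in\widehat{x}(\emptyset)}F(x)$ if $|\widehat{x}(\emptyset)|=2^{|S|}$ and $dF(\bar x)=0$ otherwise. $\mathscr{G}_S(Z)$ is the set of all functions $dF$ as $F$ ranges over functions $Z\to\mathbb{F}_2$, and $\mathscr{G}_S(\epsilon,Z)$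 is the set of $g\in\mathscr{G}_S(Z)$ expressible as $g=dF$ for some $F$ equal to $1$ on more than $(0.5+\epsilon)|Z|$ or fewer than $(0.5-\epsilon)|Z|$ points of $Z$. *)

theory Defs
  imports "HOL-Analysis.Analysis" "HOL-Library.FuncSet"
begin

text \<open>A point of Xbar_S is encoded as a pair (u,v) of points of X agreeing off S:
  the i-th coordinate is the pair (u i, v i) for i in S and the common value
  u i = v i otherwise. This is a bijective encoding of Xbar_S.
  F_2 is encoded by bool (True = 1); sums in F_2 become parity of a count.\<close>

definition Xprod :: "nat \<Rightarrow> (nat \<Rightarrow> 'a set) \<Rightarrow> (nat \<Rightarrow> 'a) set" where
  "Xprod d Xs = PiE {1..d} Xs"

definition proj :: "nat set \<Rightarrow> (nat \<Rightarrow> 'a) \<Rightarrow> (nat \<Rightarrow> 'a)" where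
  "proj T x = restrict x T"

definition Xbar :: "nat \<Rightarrow> (nat \<Rightarrow> 'a set) \<Rightarrow> nat set \<Rightarrow> ((nat \<Rightarrow> 'a) \<times> (nat \<Rightarrow> 'a)) set" where
  "Xbar d Xs S = {(u, v). u \<in> Xprod d Xs \<and> v \<in> Xprod d Xs \<and> (\<forall>i\<in>{1..d} - S. u i = v i)}"

definition hatx :: "nat \<Rightarrow> (nat \<Rightarrow> 'a set) \<Rightarrow> nat set \<Rightarrow> (nat \<Rightarrow> 'a) \<times> (nat \<Rightarrow> 'a) \<Rightarrow> (nat \<Rightarrow> 'a) set" where
  "hatx d Xs S xb = {y \<in> Xprod d Xs. (\<forall>i\<in>S. y i = fst xb i \<or> y i = snd xb i)
                                      \<and> (\<forall>i\<in>{1..d} - S. y i = fst xb i)}"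

text \<open>dF, defined on {xb in Xbar_S. hatx xb \<subseteq> Z}; extended by 0 (False) outside
  this (fixed) domain, so that distinct functions correspond to distinct dF.\<close>
definition dF :: "nat \<Rightarrow> (nat \<Rightarrow> 'a set) \<Rightarrow> nat set \<Rightarrow> (nat \<Rightarrow> 'a) set \<Rightarrow> ((nat \<Rightarrow> 'a) \<Rightarrow> bool)
                 \<Rightarrow> (nat \<Rightarrow> 'a) \<times> (nat \<Rightarrow> 'a) \<Rightarrow> bool" where
  "dF d Xs S Z F = (\<lambda>xb. if xb \<in> Xbar d Xs S \<and> hatx d Xs S xb \<subseteq> Z
                             \<and> card (hatx d Xs S xb) = 2 ^ card S
                          then odd (card {x \<in> hatx d Xs S xb. F x}) else False)"

definition GS :: "nat \<Rightarrow> (nat \<Rightarrow> 'a set) \<Rightarrow> nat set \<Rightarrow> (nat \<Rightarrow> 'a) set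
                  \<Rightarrow> ((nat \<Rightarrow> 'a) \<times> (nat \<Rightarrow> 'a) \<Rightarrow> bool) set" where
  "GS d Xs S Z = (\<lambda>F. dF d Xs S Z F) ` (Z \<rightarrow>\<^sub>E (UNIV :: bool set))"

definition GS_eps :: "nat \<Rightarrow> (nat \<Rightarrow> 'a set) \<Rightarrow> nat set \<Rightarrow> real \<Rightarrow> (nat \<Rightarrow> 'a) set
                  \<Rightarrow> ((nat \<Rightarrow> 'a) \<times> (nat \<Rightarrow> 'a) \<Rightarrow> bool) set" where
  "GS_eps d Xs S \<epsilon> Z = {g. \<exists>F \<in> Z \<rightarrow>\<^sub>E (UNIV :: bool set). g = dF d Xs S Z F \<and>
      (real (card {z \<in> Z. F z}) > (1/2 + \<epsilon>) * real (card Z) \<or>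
       real (card {z \<in> Z. F z}) < (1/2 - \<epsilon>) * real (card Z))}"

end

theory Submission
  imports Defs "HOL-Probability.Hoeffding"
begin



lemma binom_sum_bound:
  fixes m :: nat and e :: real
  assumes "m > 0" "e \<ge> 0"
  shows "real (\<Sum>j\<in>{j\<in>{..m}. e \<le> \<bar>real j - real m / 2\<bar>}. m choose j)
         \<le> 2 ^ m * (2 * exp (- 2 * e\<^sup>2 / real m))"
proof -
  let ?J = "{j\<in>{..m}. e \<le> \<bar>real j - real m / 2\<bar>}"
  let ?B = "binomial_pmf m (1/2::real)"
  have bd: "binomial_distribution (1/2)" by unfold_locales auto
  have "real (\<Sum>j\<in>?J. m choose j) = (\<Sum>j\<in>?J. 2 ^ m * pmf ?B j)"
    unfolding of_nat_sum
  proof (rule sum.cong[OF refl])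
    fix j assume j: "j \<in> ?J"
    hence "j \<le> m" by auto
    have "(1/2::real) ^ j * (1 - 1/2) ^ (m - j) = (1/2) ^ m"
      using \<open>j \<le> m\<close> by (simp add: power_add[symmetric])
    thus "real (m choose j) = 2 ^ m * pmf ?B j"
      by (simp add: power_one_over)
  qed
  also have "\<dots> = 2 ^ m * measure_pmf.prob ?B ?J"
    by (simp add: measure_measure_pmf_finite sum_distrib_left)
  also have "\<dots> \<le> 2 ^ m * measure_pmf.prob ?B {x. e \<le> \<bar>real x - real m * (1/2)\<bar>}"
    by (intro mult_left_mono measure_pmf.finite_measure_mono) auto
  also have "\<dots> \<le> 2 ^ m * (2 * exp (- 2 * e\<^sup>2 / real m))"
    by (intro mult_left_mono binomial_distribution.prob_abs_ge[OF bd]) (use assms in auto)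
  finally show ?thesis .
qed

lemma imb_count:
  fixes Z :: "'b set" and e :: real
  assumes "finite Z" "Z \<noteq> {}" "e \<ge> 0"
  shows "real (card {F \<in> Z \<rightarrow>\<^sub>E (UNIV::bool set). e * card Z \<le> \<bar>real (card {z\<in>Z. F z}) - card Z / 2\<bar>})
         \<le> 2 ^ card Z * (2 * exp (- 2 * e\<^sup>2 * card Z))"
proof -
  let ?m = "card Z"
  let ?T = "{F \<in> Z \<rightarrow>\<^sub>E (UNIV::bool set). e * card Z \<le> \<bar>real (card {z\<in>Z. F z}) - card Z / 2\<bar>}"
  let ?J = "{j\<in>{..?m}. e * ?m \<le> \<bar>real j - real ?m / 2\<bar>}"
  let ?P = "\<Union>j\<in>?J. {B. B \<subseteq> Z \<and> card B = j}"
  have m: "?m > 0" using assms by (simp add: card_gt_0_iff)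
  have inj: "inj_on (\<lambda>F. {z\<in>Z. F z}) ?T"
  proof (rule inj_onI)
    fix F G assume F: "F \<in> ?T" and G: "G \<in> ?T" and eq: "{z\<in>Z. F z} = {z\<in>Z. G z}"
    show "F = G"
    proof (rule extensionalityI[of _ Z])
      show "F \<in> extensional Z" "G \<in> extensional Z" using F G by (auto simp: PiE_def)
      fix x assume "x \<in> Z" thus "F x = G x" using eq by blast
    qed
  qed
  have sub: "(\<lambda>F. {z\<in>Z. F z}) ` ?T \<subseteq> ?P"
  proof
    fix B assume "B \<in> (\<lambda>F. {z\<in>Z. F z}) ` ?T"
    then obtain F where F: "F \<in> ?T" and B: "B = {z\<in>Z. F z}" by blast
    have "card B \<le> ?m" using B assms(1) by (auto intro: card_mono)
    thus "B \<in> ?P" using F B by auto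
  qed
  have finP: "finite ?P" using assms(1) by auto
  have "card ?T \<le> card ?P"
    using card_inj_on_le[OF inj sub finP] .
  also have "card ?P = (\<Sum>j\<in>?J. card {B. B \<subseteq> Z \<and> card B = j})"
    by (rule card_UN_disjoint) (use assms(1) in auto)
  also have "\<dots> = (\<Sum>j\<in>?J. ?m choose j)"
    using n_subsets[OF assms(1)] by simp
  finally have "real (card ?T) \<le> real (\<Sum>j\<in>?J. ?m choose j)" by linarith
  also have "\<dots> \<le> 2 ^ ?m * (2 * exp (- 2 * (e * ?m)\<^sup>2 / real ?m))"
    by (rule binom_sum_bound) (use m assms in auto)
  also have "- 2 * (e * ?m)\<^sup>2 / real ?m = - 2 * e\<^sup>2 * ?m"
    using m by (simp add: power2_eq_square field_simps)
  finally show ?thesis .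
qed


lemma ge1_powr:
  fixes A n :: nat and c :: real
  assumes "A \<ge> n" "n \<ge> 1" "0 \<le> c" "c \<le> 1"
  shows "real A * real n powr (- c) \<ge> 1"
proof -
  have "real n powr (-1) \<le> real n powr (-c)"
    by (rule powr_mono) (use assms in auto)
  hence "1 / real n \<le> real n powr (-c)" using assms by (simp add: powr_minus_divide)
  hence "real A * (1 / real n) \<le> real A * real n powr (-c)" by (intro mult_left_mono) auto
  moreover have "real A * (1 / real n) \<ge> 1" using assms by simp
  ultimately show ?thesis by linarith
qed

lemma final_ineq:
  fixes D Y A t :: real
  assumes "D\<^sup>2 \<le> Y * (D + A\<^sup>2 * (4 * Y * t\<^sup>2))" "A * t \<ge> 1" "D \<ge> 0" "Y \<ge> 0" "A \<ge> 0" "t \<ge> 0"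
  shows "D \<le> 4 * (A * Y) * t"
proof (rule ccontr)
  assume "\<not> ?thesis" hence M: "D > 4 * A * Y * t" by simp
  have "Y * D \<le> A * t * Y * D" using assms mult_right_mono[OF assms(2), of "Y*D"] by (simp add: algebra_simps)
  also have "\<dots> = (4 * A * Y * t) * D / 4" by simp
  also have "\<dots> < D * D / 4" using M assms(3-6) by (intro divide_strict_right_mono mult_strict_right_mono) (auto intro!: le_less_trans[OF _ M])
  finally have 1: "Y * D < D * D / 4" .
  have "(4 * A * Y * t)\<^sup>2 < D\<^sup>2" using M assms by (intro power_strict_mono) auto
  hence 2: "Y * (A * A * (4 * Y * (t * t))) < D * D / 4" by (simp add: power2_eq_square algebra_simps)
  from 1 2 assms(1) mult_nonneg_nonneg[OF assms(3) assms(3)] show False unfolding power2_eq_square distrib_left by linarith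
qed



lemma box_free_bound:
  fixes Xs :: "'i \<Rightarrow> 'a set" and S :: "'i set" and n :: nat
  assumes "finite S" "S \<noteq> {}"
  shows "\<lbrakk>\<forall>i\<in>S. finite (Xs i) \<and> card (Xs i) \<ge> n; n \<ge> 1; D \<subseteq> PiE S Xs;
    \<forall>u\<in>PiE S Xs. \<forall>v\<in>PiE S Xs. (\<forall>i\<in>S. u i \<noteq> v i) \<longrightarrow> \<not> PiE S (\<lambda>i. {u i, v i}) \<subseteq> D\<rbrakk>
    \<Longrightarrow> real (card D) \<le> 4 * real (card (PiE S Xs)) * real n powr (- 1 / 2 ^ card S)"
  using assms
proof (induction S arbitrary: D rule: finite_ne_induct)
  case (singleton a)
  have finD: "finite D" using singleton.prems(1,3) by (auto intro: finite_subset finite_PiE)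
  have "\<forall>u\<in>D. \<forall>v\<in>D. u = v"
  proof (intro ballI)
    fix u v assume u: "u \<in> D" and v: "v \<in> D"
    have uP: "u \<in> PiE {a} Xs" and vP: "v \<in> PiE {a} Xs" using u v singleton.prems(3) by auto
    show "u = v"
    proof (cases "u a = v a")
      case True
      show ?thesis by (rule extensionalityI[of _ "{a}"]) (use uP vP True in \<open>auto simp: PiE_def\<close>)
    next
      case False
      have "PiE {a} (\<lambda>i. {u i, v i}) \<subseteq> D"
      proof
        fix y assume y: "y \<in> PiE {a} (\<lambda>i. {u i, v i})"
        have "y = u \<or> y = v"
        proof (cases "y a = u a")
          case True
          hence "y = u" by (intro extensionalityI[of _ "{a}"]) (use uP y in \<open>auto simp: PiE_def\<close>)
          thus ?thesis ..
        next
          case False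
          hence "y a = v a" using y by auto
          hence "y = v" by (intro extensionalityI[of _ "{a}"]) (use vP y in \<open>auto simp: PiE_def\<close>)
          thus ?thesis ..
        qed
        thus "y \<in> D" using u v by auto
      qed
      thus ?thesis using singleton.prems(4) uP vP False by auto
    qed
  qed
  hence cD: "card D \<le> 1" using card_le_Suc0_iff_eq[OF finD] by simp
  have cP: "card (PiE {a} Xs) = card (Xs a)" by (simp add: card_PiE)
  have "1 \<le> real (card (Xs a)) * real n powr (- (1/2))"
    by (rule ge1_powr) (use singleton.prems in auto)
  thus ?case using cD cP by simp
next
  case (insert a S')
  let ?S = "insert a S'"
  let ?Y = "PiE S' Xs"
  let ?A = "Xs a"
  define Dx where "Dx x = {y \<in> ?Y. y(a:=x) \<in> D}" for x
  define ind where "ind x y = (if y(a:=x) \<in> D then 1 else 0::real)" for x y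
  define deg where "deg y = (\<Sum>x\<in>?A. ind x y)" for y
  define k' where "k' = card S'"
  define t where "t = real n powr (- 1 / 2 ^ card ?S)"
  define B where "B = 4 * real (card ?Y) * real n powr (- 1 / 2 ^ k')"
  have finA: "finite ?A" and cA: "card ?A \<ge> n" using insert.prems(1) by auto
  have finY: "finite ?Y" using insert.prems(1) insert.hyps(1) by (intro finite_PiE) auto
  have n1: "n \<ge> 1" using insert.prems(2) .
  have cS: "card ?S = Suc k'" using insert.hyps k'_def by simp
  
  have bij: "bij_betw (\<lambda>f. (f a, f(a:=undefined))) D (Sigma ?A Dx)"
  proof (rule bij_betwI[where g = "\<lambda>(x,y). y(a:=x)"])
    show "(\<lambda>f. (f a, f(a:=undefined))) \<in> D \<rightarrow> Sigma ?A Dx"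
    proof
      fix f assume f: "f \<in> D"
      hence fP: "f \<in> PiE ?S Xs" using insert.prems(3) by auto
      have "f(a:=undefined) \<in> ?Y" using fP insert.hyps by (auto simp: PiE_def extensional_def Pi_def split: if_splits)
      moreover have "(f(a:=undefined))(a := f a) = f" by simp
      ultimately show "(f a, f(a:=undefined)) \<in> Sigma ?A Dx" using f fP by (auto simp: Dx_def)
    qed
    show "(\<lambda>(x,y). y(a:=x)) \<in> Sigma ?A Dx \<rightarrow> D" by (auto simp: Dx_def)
    show "(\<lambda>(x,y). y(a:=x)) (f a, f(a:=undefined)) = f" for f by simp
    show "(\<lambda>f. (f a, f(a:=undefined))) ((\<lambda>(x,y). y(a:=x)) p) = p" if pS: "p \<in> Sigma ?A Dx" for p
    proof -
      obtain x y where p: "p = (x,y)" "x \<in> ?A" "y \<in> Dx x" using pS by (cases p) auto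
      hence "y \<in> ?Y" by (auto simp: Dx_def)
      hence "y a = undefined" using insert.hyps by (auto simp: PiE_def extensional_def)
      thus ?thesis using p by (auto simp: fun_eq_iff)
    qed
  qed
  have finDx: "finite (Dx x)" for x using finY by (auto simp: Dx_def)
  have c1: "card D = (\<Sum>x\<in>?A. card (Dx x))"
    using bij_betw_same_card[OF bij] finA finDx by simp
  have cardDx: "real (card (Dx x)) = (\<Sum>y\<in>?Y. ind x y)" for x
    unfolding Dx_def ind_def using finY by (simp add: sum.inter_filter[symmetric])
  have cardDx2: "real (card (Dx x \<inter> Dx x')) = (\<Sum>y\<in>?Y. ind x y * ind x' y)" for x x'
  proof -
    have "Dx x \<inter> Dx x' = {y\<in>?Y. y(a:=x) \<in> D \<and> y(a:=x') \<in> D}" by (auto simp: Dx_def)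
    hence "real (card (Dx x \<inter> Dx x')) = (\<Sum>y\<in>?Y. if y(a:=x) \<in> D \<and> y(a:=x') \<in> D then 1 else 0)"
      using finY by (simp add: sum.inter_filter[symmetric])
    thus ?thesis unfolding ind_def by (simp add: if_distrib cong: if_cong) (intro sum.cong refl, auto)
  qed
  have c4: "real (card D) = (\<Sum>y\<in>?Y. deg y)"
    unfolding c1 of_nat_sum cardDx deg_def by (rule sum.swap)
  have c3: "(\<Sum>x\<in>?A. \<Sum>x'\<in>?A. real (card (Dx x \<inter> Dx x'))) = (\<Sum>y\<in>?Y. (deg y)\<^sup>2)"
  proof -
    have "(\<Sum>x\<in>?A. \<Sum>x'\<in>?A. real (card (Dx x \<inter> Dx x'))) = (\<Sum>x\<in>?A. \<Sum>x'\<in>?A. \<Sum>y\<in>?Y. ind x y * ind x' y)"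
      by (simp add: cardDx2)
    also have "\<dots> = (\<Sum>x\<in>?A. \<Sum>y\<in>?Y. \<Sum>x'\<in>?A. ind x y * ind x' y)"
      by (intro sum.cong refl sum.swap)
    also have "\<dots> = (\<Sum>y\<in>?Y. \<Sum>x\<in>?A. \<Sum>x'\<in>?A. ind x y * ind x' y)"
      by (rule sum.swap)
    also have "\<dots> = (\<Sum>y\<in>?Y. (deg y)\<^sup>2)"
      by (simp add: deg_def power2_eq_square sum_product)
    finally show ?thesis .
  qed
  
  have c2: "real (card (Dx x \<inter> Dx x')) \<le> B" if x: "x \<in> ?A" "x' \<in> ?A" "x \<noteq> x'" for x x'
  proof -
    have "real (card (Dx x \<inter> Dx x')) \<le> 4 * real (card ?Y) * real n powr (- 1 / 2 ^ card S')"
    proof (rule insert.IH)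
      show "\<forall>i\<in>S'. finite (Xs i) \<and> n \<le> card (Xs i)" using insert.prems(1) by auto
      show "1 \<le> n" by (rule n1)
      show "Dx x \<inter> Dx x' \<subseteq> ?Y" by (auto simp: Dx_def)
      show "\<forall>u\<in>?Y. \<forall>v\<in>?Y. (\<forall>i\<in>S'. u i \<noteq> v i) \<longrightarrow> \<not> PiE S' (\<lambda>i. {u i, v i}) \<subseteq> Dx x \<inter> Dx x'"
      proof (intro ballI impI notI)
        fix u v assume u: "u \<in> ?Y" and v: "v \<in> ?Y" and uv: "\<forall>i\<in>S'. u i \<noteq> v i"
          and sub: "PiE S' (\<lambda>i. {u i, v i}) \<subseteq> Dx x \<inter> Dx x'"
        let ?U = "u(a:=x)" and ?V = "v(a:=x')"
        have U: "?U \<in> PiE ?S Xs" using u x by (auto simp: PiE_def extensional_def)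
        have V: "?V \<in> PiE ?S Xs" using v x by (auto simp: PiE_def extensional_def)
        have UV: "\<forall>i\<in>?S. ?U i \<noteq> ?V i" using uv x insert.hyps by auto
        have "PiE ?S (\<lambda>i. {?U i, ?V i}) \<subseteq> D"
        proof
          fix f assume f: "f \<in> PiE ?S (\<lambda>i. {?U i, ?V i})"
          let ?g = "f(a:=undefined)"
          have g: "?g \<in> PiE S' (\<lambda>i. {u i, v i})"
            using f insert.hyps by (auto simp: PiE_def extensional_def split: if_splits)
          hence g2: "?g \<in> Dx x \<inter> Dx x'" using sub by auto
          have fa: "f a = x \<or> f a = x'" using PiE_mem[OF f, of a] by auto
          have feq: "f = ?g(a := f a)" by simp
          show "f \<in> D" using fa g2 feq by (auto simp: Dx_def)
        qed
        thus False using insert.prems(4) U V UV by blast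
      qed
    qed
    thus ?thesis by (simp add: B_def k'_def)
  qed
  have B0: "B \<ge> 0" by (simp add: B_def)
  
  have c5: "(\<Sum>x\<in>?A. \<Sum>x'\<in>?A. real (card (Dx x \<inter> Dx x'))) \<le> real (card D) + real (card ?A) * real (card ?A) * B"
  proof -
    have row: "(\<Sum>x'\<in>?A. real (card (Dx x \<inter> Dx x'))) \<le> real (card (Dx x)) + real (card ?A) * B"
      if x: "x \<in> ?A" for x
    proof -
      have "(\<Sum>x'\<in>?A. real (card (Dx x \<inter> Dx x'))) = real (card (Dx x \<inter> Dx x)) + (\<Sum>x'\<in>?A - {x}. real (card (Dx x \<inter> Dx x')))"
        using sum.remove[OF finA x, of "\<lambda>x'. real (card (Dx x \<inter> Dx x'))"] by simp
      also have "(\<Sum>x'\<in>?A - {x}. real (card (Dx x \<inter> Dx x'))) \<le> (\<Sum>x'\<in>?A - {x}. B)"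
        by (intro sum_mono c2) (use x in auto)
      also have "\<dots> \<le> real (card ?A) * B"
        using B0 finA by (simp, intro mult_right_mono) (auto intro: card_mono)
      finally show ?thesis by simp
    qed
    have "(\<Sum>x\<in>?A. \<Sum>x'\<in>?A. real (card (Dx x \<inter> Dx x'))) \<le> (\<Sum>x\<in>?A. real (card (Dx x)) + real (card ?A) * B)"
      by (intro sum_mono row)
    also have "\<dots> = real (card D) + real (card ?A) * real (card ?A) * B"
      by (simp add: sum.distrib c1)
    finally show ?thesis .
  qed
  have CS: "(\<Sum>y\<in>?Y. deg y)\<^sup>2 \<le> (\<Sum>y\<in>?Y. (deg y)\<^sup>2) * real (card ?Y)"
    by (rule sum_squared_le_sum_of_squares)
  have t2: "t\<^sup>2 = real n powr (- 1 / 2 ^ k')"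
  proof -
    have "t\<^sup>2 = real n powr (- 1 / 2 ^ Suc k' + - 1 / 2 ^ Suc k')"
      unfolding t_def cS power2_eq_square by (rule powr_add[symmetric])
    also have "- 1 / 2 ^ Suc k' + - 1 / 2 ^ Suc k' = (- 1 / 2 ^ k' :: real)" by simp
    finally show ?thesis .
  qed
  have main: "(real (card D))\<^sup>2 \<le> real (card ?Y) * (real (card D) + (real (card ?A))\<^sup>2 * (4 * real (card ?Y) * t\<^sup>2))"
  proof -
    have Q: "(\<Sum>y\<in>?Y. (deg y)\<^sup>2) \<le> real (card D) + real (card ?A) * real (card ?A) * B"
      using c3 c5 by simp
    have "(real (card D))\<^sup>2 \<le> (\<Sum>y\<in>?Y. (deg y)\<^sup>2) * real (card ?Y)" using CS c4 by simp
    also have "\<dots> \<le> (real (card D) + real (card ?A) * real (card ?A) * B) * real (card ?Y)"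
      by (intro mult_right_mono Q) auto
    finally show ?thesis unfolding B_def t2 by (simp add: power2_eq_square algebra_simps)
  qed
  have At: "real (card ?A) * t \<ge> 1"
    unfolding t_def using ge1_powr[of n "card ?A" "1 / 2 ^ card ?S"] cA n1 by simp
  have t0: "t \<ge> 0" by (simp add: t_def)
  have "real (card D) \<le> 4 * (real (card ?A) * real (card ?Y)) * t"
    by (rule final_ineq[OF main At]) (use t0 in auto)
  moreover have "card (PiE ?S Xs) = card ?A * card ?Y"
    using insert.hyps by (simp add: card_PiE)
  ultimately show ?case by (simp add: t_def)
qed



theorem proposition4p3:
  fixes d n :: nat and Xs :: "nat \<Rightarrow> 'a set" and S :: "nat set"
    and Z :: "(nat \<Rightarrow> 'a) set" and \<delta> \<epsilon> :: real
  assumes "\<forall>i\<in>{1..d}. finite (Xs i) \<and> Xs i \<noteq> {}"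
    and "\<forall>i\<in>{1..d}. \<forall>j\<in>{1..d}. i \<noteq> j \<longrightarrow> Xs i \<inter> Xs j = {}"
    and "S \<subseteq> {1..d}" and "card S \<ge> 2"
    and "Z \<subseteq> Xprod d Xs"
    and "card (proj ({1..d} - S) ` Z) = 1"
    and "\<delta> > 0" and "real (card Z) \<ge> \<delta> * real (card (PiE S Xs))"
    and "n \<ge> 1" and "\<forall>i\<in>S. card (Xs i) \<ge> n"
    and "\<epsilon> > 0"
  shows "real (card (GS_eps d Xs S \<epsilon> Z)) / real (card (GS d Xs S Z))
         \<le> exp (real (card (PiE S Xs)) *
                (- \<delta> * \<epsilon>\<^sup>2 + 2 ^ (card S + 2) * real n powr (- 1 / 2 ^ card S)))"
proof -
  note A = assms
  define k where "k = card S"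
  define N where "N = card (PiE S Xs)"
  define m where "m = card Z"
  define X where "X = real N * real n powr (- 1 / 2 ^ k)"
  have finS: "finite S" using A(3) finite_subset by blast
  have Sne: "S \<noteq> {}" using A(4) by auto
  have finX: "finite (Xprod d Xs)" unfolding Xprod_def using A(1) by (intro finite_PiE) auto
  have finZ: "finite Z" using A(5) finX finite_subset by blast
  obtain c where c: "proj ({1..d} - S) ` Z = {c}" using A(6) card_1_singletonE by blast
  then obtain z0 where z0: "z0 \<in> Z" by auto
  have offS: "z i = z0 i" if "z \<in> Z" "i \<in> {1..d} - S" for z i
  proof -
    have e: "proj ({1..d} - S) z = proj ({1..d} - S) z0" using c that(1) z0 by (metis imageI singletonD)
    have "restrict z ({1..d} - S) i = restrict z0 ({1..d} - S) i" using fun_cong[OF e, of i] by (simp only: proj_def)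
    thus ?thesis using that(2) by simp
  qed
  have ZP: "z \<in> PiE {1..d} Xs" if "z \<in> Z" for z using that A(5) by (auto simp: Xprod_def)
  have injS: "z1 = z2" if "z1 \<in> Z" "z2 \<in> Z" "\<forall>i\<in>S. z1 i = z2 i" for z1 z2
  proof (rule extensionalityI[of _ "{1..d}"])
    show "z1 \<in> extensional {1..d}" "z2 \<in> extensional {1..d}" using ZP that by (auto simp: PiE_def)
    fix i assume "i \<in> {1..d}"
    thus "z1 i = z2 i" using that offS[OF that(1), of i] offS[OF that(2), of i] by (cases "i \<in> S") auto
  qed
  obtain idx :: "(nat \<Rightarrow> 'a) \<Rightarrow> nat" where idx: "inj_on idx Z"
    using finite_imp_inj_to_nat_seg[OF finZ] by blast
  define good where "good xb \<longleftrightarrow> xb \<in> Xbar d Xs S \<and> hatx d Xs S xb \<subseteq> Z \<and> card (hatx d Xs S xb) = 2 ^ card S" for xb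
  define D where "D = {z \<in> Z. \<not> (\<exists>xb. good xb \<and> z \<in> hatx d Xs S xb \<and> (\<forall>y\<in>hatx d Xs S xb. y \<noteq> z \<longrightarrow> idx y < idx z))}"
  have DZ: "D \<subseteq> Z" by (auto simp: D_def)
  have key: "\<forall>z\<in>Z. F z = G z" if FG: "dF d Xs S Z F = dF d Xs S Z G" "\<forall>z\<in>D. F z = G z" for F G
  proof -
    have "\<forall>z. z \<in> Z \<longrightarrow> idx z = j \<longrightarrow> F z = G z" for j
    proof (induction j rule: less_induct)
      case (less j)
      show ?case
      proof (intro allI impI)
        fix z assume z: "z \<in> Z" "idx z = j"
        show "F z = G z"
        proof (cases "z \<in> D")
          case True thus ?thesis using FG(2) by auto
        next
          case False
          then obtain xb where xb: "good xb" "z \<in> hatx d Xs S xb"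
            "\<forall>y\<in>hatx d Xs S xb. y \<noteq> z \<longrightarrow> idx y < idx z" using z(1) by (auto simp: D_def)
          let ?H = "hatx d Xs S xb"
          have HZ: "?H \<subseteq> Z" and cH: "card ?H = 2 ^ card S" using xb(1) by (auto simp: good_def)
          have finH: "finite ?H" using cH card_gt_0_iff by fastforce
          have eqo: "\<forall>y\<in>?H - {z}. F y = G y" using less.IH xb(3) z(2) HZ by blast
          have "dF d Xs S Z F xb = dF d Xs S Z G xb" using FG(1) by simp
          hence oe: "odd (card {x\<in>?H. F x}) = odd (card {x\<in>?H. G x})"
            using xb(1) by (simp add: dF_def good_def)
          have spl: "card {x\<in>?H. P x} = card {x\<in>?H - {z}. P x} + (if P z then 1 else 0)" for P
          proof (cases "P z")
            case True
            hence "{x\<in>?H. P x} = insert z {x\<in>?H - {z}. P x}" using xb(2) by auto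
            thus ?thesis using True finH by simp
          next
            case False
            hence "{x\<in>?H. P x} = {x\<in>?H - {z}. P x}" by auto
            thus ?thesis using False by simp
          qed
          have "{x\<in>?H - {z}. F x} = {x\<in>?H - {z}. G x}" using eqo by auto
          thus ?thesis using oe spl[of F] spl[of G] by (cases "F z"; cases "G z") auto
        qed
      qed
    qed
    thus ?thesis by blast
  qed
  have count: "2 ^ m \<le> card (GS d Xs S Z) * 2 ^ card D"
  proof -
    define \<Phi> where "\<Phi> F = (dF d Xs S Z F, restrict F D)" for F :: "(nat \<Rightarrow> 'a) \<Rightarrow> bool"
    have inj: "inj_on \<Phi> (Z \<rightarrow>\<^sub>E (UNIV::bool set))"
    proof (rule inj_onI)
      fix F G assume F: "F \<in> Z \<rightarrow>\<^sub>E (UNIV::bool set)" and G: "G \<in> Z \<rightarrow>\<^sub>E (UNIV::bool set)" and e: "\<Phi> F = \<Phi> G"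
      have e1: "dF d Xs S Z F = dF d Xs S Z G" and e2: "restrict F D = restrict G D" using e by (auto simp: \<Phi>_def)
      have "\<forall>z\<in>D. F z = G z"
      proof
        fix z assume "z \<in> D"
        thus "F z = G z" using fun_cong[OF e2, of z] by simp
      qed
      hence "\<forall>z\<in>Z. F z = G z" using key e1 by blast
      thus "F = G" using F G by (intro extensionalityI[of _ Z]) (auto simp: PiE_def)
    qed
    have finP: "finite (Z \<rightarrow>\<^sub>E (UNIV::bool set))" using finZ by (intro finite_PiE) auto
    have finGS: "finite (GS d Xs S Z)" unfolding GS_def using finP by simp
    have finD: "finite D" using DZ finZ finite_subset by blast
    have sub: "\<Phi> ` (Z \<rightarrow>\<^sub>E (UNIV::bool set)) \<subseteq> GS d Xs S Z \<times> (D \<rightarrow>\<^sub>E (UNIV::bool set))"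
      by (auto simp: \<Phi>_def GS_def)
    have "card (Z \<rightarrow>\<^sub>E (UNIV::bool set)) \<le> card (GS d Xs S Z \<times> (D \<rightarrow>\<^sub>E (UNIV::bool set)))"
      by (rule card_inj_on_le[OF inj sub]) (use finGS finD in \<open>simp add: finite_PiE\<close>)
    thus ?thesis using finZ finD by (simp add: card_PiE card_cartesian_product m_def)
  qed
  have boxfree: "\<not> hatx d Xs S xb \<subseteq> D" if g: "good xb" for xb
  proof
    assume sub: "hatx d Xs S xb \<subseteq> D"
    let ?H = "hatx d Xs S xb"
    have cH: "card ?H = 2 ^ card S" using g by (auto simp: good_def)
    have finH: "finite ?H" and neH: "?H \<noteq> {}" using cH card_gt_0_iff by fastforce+
    obtain w where w: "w \<in> idx ` ?H" "\<forall>v\<in>idx ` ?H. v \<le> w"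
      using finH neH by (metis Max_ge Max_in finite_imageI image_is_empty)
    then obtain z where z: "z \<in> ?H" "idx z = w" by blast
    have zD: "z \<in> D" using z sub by auto
    have "\<forall>y\<in>?H. y \<noteq> z \<longrightarrow> idx y < idx z"
    proof (intro ballI impI)
      fix y assume y: "y \<in> ?H" "y \<noteq> z"
      have "idx y \<le> idx z" using w z y by auto
      moreover have "idx y \<noteq> idx z" using idx y z sub DZ by (meson inj_onD subsetD)
      ultimately show "idx y < idx z" by simp
    qed
    thus False using zD g z(1) unfolding D_def by blast
  qed
  define D' where "D' = (\<lambda>z. restrict z S) ` D"
  have injr: "inj_on (\<lambda>z. restrict z S) D"
  proof (rule inj_onI)
    fix z1 z2 assume z: "z1 \<in> D" "z2 \<in> D" "restrict z1 S = restrict z2 S"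
    have "\<forall>i\<in>S. z1 i = z2 i"
    proof
      fix i assume "i \<in> S"
      thus "z1 i = z2 i" using fun_cong[OF z(3), of i] by simp
    qed
    thus "z1 = z2" using injS z(1,2) DZ by blast
  qed
  have cD': "card D' = card D" unfolding D'_def by (rule card_image[OF injr])
  have D'sub: "D' \<subseteq> PiE S Xs" unfolding D'_def using DZ ZP A(3) by (auto simp: PiE_def Pi_def) (meson atLeastAtMost_iff subsetD)
  have D'free: "\<forall>u\<in>PiE S Xs. \<forall>v\<in>PiE S Xs. (\<forall>i\<in>S. u i \<noteq> v i) \<longrightarrow> \<not> PiE S (\<lambda>i. {u i, v i}) \<subseteq> D'"
  proof (intro ballI impI notI)
    fix u v assume u: "u \<in> PiE S Xs" and v: "v \<in> PiE S Xs" and uv: "\<forall>i\<in>S. u i \<noteq> v i"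
      and sub: "PiE S (\<lambda>i. {u i, v i}) \<subseteq> D'"
    define U where "U i = (if i \<in> S then u i else z0 i)" for i
    define V where "V i = (if i \<in> S then v i else z0 i)" for i
    have z0P: "z0 \<in> PiE {1..d} Xs" using ZP z0 by blast
    have UP: "U \<in> PiE {1..d} Xs" using u z0P A(3) by (auto simp: U_def PiE_def Pi_def extensional_def)
    have VP: "V \<in> PiE {1..d} Xs" using v z0P A(3) by (auto simp: V_def PiE_def Pi_def extensional_def)
    have xbX: "(U, V) \<in> Xbar d Xs S" using UP VP by (auto simp: Xbar_def Xprod_def U_def V_def)
    have Heq: "hatx d Xs S (U, V) = PiE {1..d} (\<lambda>i. if i \<in> S then {U i, V i} else {U i})"
    proof
      show "hatx d Xs S (U, V) \<subseteq> PiE {1..d} (\<lambda>i. if i \<in> S then {U i, V i} else {U i})"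
        by (auto simp: hatx_def Xprod_def PiE_def Pi_def)
      show "PiE {1..d} (\<lambda>i. if i \<in> S then {U i, V i} else {U i}) \<subseteq> hatx d Xs S (U, V)"
      proof
        fix y assume y: "y \<in> PiE {1..d} (\<lambda>i. if i \<in> S then {U i, V i} else {U i})"
        have "y \<in> PiE {1..d} Xs"
        proof -
          have "y i \<in> Xs i" if "i \<in> {1..d}" for i
            using PiE_mem[OF y that] PiE_mem[OF UP that] PiE_mem[OF VP that] by (auto split: if_splits)
          thus ?thesis using y by (auto simp: PiE_def)
        qed
        moreover have "\<forall>i\<in>S. y i = U i \<or> y i = V i"
        proof
          fix i assume i: "i \<in> S"
          hence "i \<in> {1..d}" using A(3) by blast
          thus "y i = U i \<or> y i = V i" using PiE_mem[OF y, of i] i by auto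
        qed
        moreover have "\<forall>i\<in>{1..d} - S. y i = U i" using y by (auto simp: PiE_def Pi_def)
        ultimately show "y \<in> hatx d Xs S (U, V)" by (simp add: hatx_def Xprod_def)
      qed
    qed
    have cardH: "card (hatx d Xs S (U, V)) = 2 ^ card S"
    proof -
      have "card (hatx d Xs S (U, V)) = (\<Prod>i\<in>{1..d}. card (if i \<in> S then {U i, V i} else {U i}))"
        unfolding Heq by (simp add: card_PiE)
      also have "\<dots> = (\<Prod>i\<in>{1..d}. if i \<in> S then 2 else 1)"
        by (intro prod.cong refl) (use uv in \<open>auto simp: U_def V_def\<close>)
      also have "\<dots> = (\<Prod>i\<in>S. 2)"
      proof -
        have e: "{1..d} \<inter> {x. x \<in> S} = S" using A(3) by auto
        have e2: "{Suc 0..d} \<inter> S = S" using A(3) by auto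
        show ?thesis by (subst prod.If_cases) (simp_all add: e e2)
      qed
      finally show ?thesis by simp
    qed
    have HD: "hatx d Xs S (U, V) \<subseteq> D"
    proof
      fix y assume y: "y \<in> hatx d Xs S (U, V)"
      have yP: "y \<in> PiE {1..d} Xs" using y by (auto simp: hatx_def Xprod_def)
      have "restrict y S \<in> PiE S (\<lambda>i. {u i, v i})" using y by (auto simp: hatx_def U_def V_def)
      hence "restrict y S \<in> D'" using sub by blast
      then obtain z where zD: "z \<in> D" and zr: "restrict z S = restrict y S" unfolding D'_def by (metis imageE)
      have zZ: "z \<in> Z" using zD DZ by auto
      have "z = y"
      proof (rule extensionalityI[of _ "{1..d}"])
        show "z \<in> extensional {1..d}" "y \<in> extensional {1..d}" using ZP[OF zZ] yP by (auto simp: PiE_def)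
        fix i assume i: "i \<in> {1..d}"
        show "z i = y i"
        proof (cases "i \<in> S")
          case True thus ?thesis using fun_cong[OF zr, of i] by simp
        next
          case False
          hence "y i = U i" using y i by (auto simp: hatx_def)
          thus ?thesis using offS[OF zZ] i False by (simp add: U_def)
        qed
      qed
      thus "y \<in> D" using zD by simp
    qed
    have "good (U, V)" using xbX HD DZ cardH by (auto simp: good_def)
    thus False using boxfree HD by blast
  qed
  have cardD: "real (card D) \<le> 4 * X"
    using box_free_bound[OF finS Sne, of Xs n D'] A(1,3,9,10) D'sub D'free cD'
    unfolding X_def N_def k_def by (auto simp: mult.assoc)
  have m0: "m > 0" using finZ z0 card_gt_0_iff m_def by blast
  define Imb where "Imb = {F \<in> Z \<rightarrow>\<^sub>E (UNIV::bool set). \<epsilon> * card Z \<le> \<bar>real (card {z\<in>Z. F z}) - card Z / 2\<bar>}"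
  have imb: "real (card Imb) \<le> 2 ^ m * (2 * exp (- 2 * \<epsilon>\<^sup>2 * m))"
    unfolding Imb_def m_def by (rule imb_count) (use finZ z0 A(11) in auto)
  have finImb: "finite Imb" unfolding Imb_def using finZ by (intro finite_subset[OF _ finite_PiE[of Z "\<lambda>_. UNIV::bool set"]]) auto
  have "GS_eps d Xs S \<epsilon> Z \<subseteq> (dF d Xs S Z) ` Imb"
  proof
    fix g assume "g \<in> GS_eps d Xs S \<epsilon> Z"
    then obtain F where F: "F \<in> Z \<rightarrow>\<^sub>E (UNIV::bool set)" "g = dF d Xs S Z F"
      "real (card {z \<in> Z. F z}) > (1/2 + \<epsilon>) * real (card Z) \<or>
       real (card {z \<in> Z. F z}) < (1/2 - \<epsilon>) * real (card Z)" by (auto simp: GS_eps_def)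
    have "F \<in> Imb" using F(1,3) unfolding Imb_def by (auto simp: algebra_simps)
    thus "g \<in> (dF d Xs S Z) ` Imb" using F(2) by blast
  qed
  hence cE: "card (GS_eps d Xs S \<epsilon> Z) \<le> card Imb"
    using finImb by (meson card_image_le card_mono finite_imageI order_trans)
  obtain a where a: "a \<in> S" using Sne by auto
  have Nge: "N \<ge> n"
  proof -
    have "N = card (Xs a) * (\<Prod>i\<in>S - {a}. card (Xs i))"
      unfolding N_def using finS a by (simp add: card_PiE prod.remove)
    moreover have "(\<Prod>i\<in>S - {a}. card (Xs i)) \<ge> 1"
      using A(10,9) by (intro prod_ge_1) (auto intro: order_trans)
    ultimately have "N \<ge> card (Xs a)" by (metis mult.right_neutral mult_le_mono2)
    thus ?thesis using A(10) a by (meson order_trans)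
  qed
  have X1: "X \<ge> 1" unfolding X_def
    using ge1_powr[OF Nge A(9), of "1 / 2 ^ k"] by simp
  have G0: "card (GS d Xs S Z) > 0" 
  proof (rule ccontr)
    assume "\<not> ?thesis"
    hence "card (GS d Xs S Z) = 0" by simp
    hence "(2::nat) ^ m \<le> 0" using count by simp
    thus False by simp
  qed
  have "real (card (GS_eps d Xs S \<epsilon> Z)) / real (card (GS d Xs S Z))
        \<le> 2 ^ m * (2 * exp (- 2 * \<epsilon>\<^sup>2 * m)) / real (card (GS d Xs S Z))"
    using cE imb G0 by (intro divide_right_mono) auto
  also have "\<dots> \<le> (real (card (GS d Xs S Z)) * 2 ^ card D) * (2 * exp (- 2 * \<epsilon>\<^sup>2 * m)) / real (card (GS d Xs S Z))"
  proof -
    have "(2::real) ^ m \<le> real (card (GS d Xs S Z) * 2 ^ card D)" using count by (metis of_nat_le_iff of_nat_numeral of_nat_power)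
    thus ?thesis using G0 by (intro divide_right_mono mult_right_mono) auto
  qed
  also have "\<dots> = 2 ^ card D * 2 * exp (- 2 * \<epsilon>\<^sup>2 * m)" using G0 by simp
  also have "\<dots> \<le> exp (4 * X) * exp X * exp (- \<delta> * \<epsilon>\<^sup>2 * N)"
  proof -
    have "(2::real) ^ card D \<le> exp 1 ^ card D"
      using exp_ge_add_one_self[of 1] by (intro power_mono) auto
    also have "\<dots> = exp (real (card D))" by (simp add: exp_of_nat_mult[symmetric])
    also have "\<dots> \<le> exp (4 * X)" using cardD by simp
    finally have 1: "(2::real) ^ card D \<le> exp (4 * X)" .
    have 2: "(2::real) \<le> exp X" using exp_ge_add_one_self[of X] X1 by linarith
    have "\<delta> * N \<le> m" using A(8) unfolding m_def N_def by simp
    hence "- 2 * \<epsilon>\<^sup>2 * m \<le> - \<delta> * \<epsilon>\<^sup>2 * N"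
    proof -
      have "\<epsilon>\<^sup>2 * (\<delta> * N) \<le> \<epsilon>\<^sup>2 * m" by (rule mult_left_mono) (use \<open>\<delta> * N \<le> m\<close> in auto)
      moreover have "0 \<le> \<epsilon>\<^sup>2 * m" by simp
      ultimately have "\<epsilon>\<^sup>2 * (\<delta> * N) \<le> 2 * (\<epsilon>\<^sup>2 * m)" by linarith
      thus ?thesis by (simp add: algebra_simps)
    qed
    hence 3: "exp (- 2 * \<epsilon>\<^sup>2 * m) \<le> exp (- \<delta> * \<epsilon>\<^sup>2 * N)" by simp
    show ?thesis using 1 2 3 by (intro mult_mono) auto
  qed
  also have "\<dots> = exp (5 * X - \<delta> * \<epsilon>\<^sup>2 * N)" by (simp add: exp_add[symmetric] algebra_simps)
  also have "\<dots> \<le> exp (real N * (- \<delta> * \<epsilon>\<^sup>2 + 2 ^ (k + 2) * real n powr (- 1 / 2 ^ k)))"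
  proof -
    have "(16::real) \<le> 2 ^ (k + 2)"
    proof -
      have "(2::real) ^ 4 \<le> 2 ^ (k + 2)" using A(4) unfolding k_def by (intro power_increasing) auto
      thus ?thesis by simp
    qed
    hence "5 * X \<le> 2 ^ (k + 2) * X" using X1 by (intro mult_right_mono) auto
    thus ?thesis unfolding X_def by (simp add: algebra_simps)
  qed
  finally show ?thesis unfolding k_def N_def .
qed

end
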